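(* Consider the parametrized system described in the context, assume $m_x\ge m_\xi$, and let $\Gamma\in\mathbb{R}^{m_y\times m_\xi}$ be a given right tangential interpolation matrix at $(\Xi,\Pi)$. Then a value $\theta\in\mathbf\Theta$ is consistent with $\Gamma$ if and only if the equation $$\begin{bmatrix}A(\theta)&B(\theta)\\ C(\theta)&D(\theta)\end{bmatrix}\begin{bmatrix}T_1\\ \Pi\end{bmatrix}=\begin{bmatrix}T_1\Xi\\ \Gamma\end{bmatrix}$$ has a solution $T_1\in\mathbb{R}^{m_x\times m_\xi}$ of full column rank.
   Context: Integers $m_x,m_u,m_y,m_v,m_z,m_\theta,m_\xi\ge 1$ are given, together with real matrices $A_{xx}\in\mathbb{R}^{m_x\times m_x}$, $B_{xu}\in\mathbb{R}^{m_x\times m_u}$, $B_{xv}\in\mathbb{R}^{m_x\times m_v}$, $C_{yx}\in\mathbb{R}^{m_y\times m_x}$, $C_{zx}\in\mathbb{R}^{m_z\times m_x}$, $D_{zu}\in\mathbb{R}^{m_z\times m_u}$, $D_{zv}\in\mathbb{R}^{m_z\times m_v}$, $D_{yu}\in\mathbb{R}^{m_y\times m_u}$, $D_{yv}\in\mathbb{R}^{m_y\times m_v}$ and $P_0,\dots,P_{m_\theta}\in\mathbb{R}^{m_v\times m_z}$. For $\theta\in\mathbb{R}^{m_\theta}$ put $P(\theta)=P_0+\sum_{i=1}^{m_\theta}\theta_iP_i$ and $$\begin{bmatrix}A(\theta)&B(\theta)\\ C(\theta)&D(\theta)\end{bmatrix}=\begin{bmatrix}A_{xx}&B_{xu}\\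 C_{yx}&D_{yu}\end{bmatrix}+\begin{bmatrix}B_{xv}\\ D_{yv}\end{bmatrix}[I_{m_v}-P(\theta)D_{zv}]^{-1}P(\theta)\begin{bmatrix}C_{zx}&D_{zu}\end{bmatrix},$$ the system matrices of $\dot x=A(\theta)x+B(\theta)u$, $y=C(\theta)x+D(\theta)u$. A compact set $\mathbf{\Theta}\subset\mathbb{R}^{m_\theta}$ is given with $I_{m_v}-P(\theta)D_{zv}$ invertible for all $\theta\in\mathbf\Theta$. Matrices $\Xi\in\mathbb{R}^{m_\xi\times m_\xi}$, $\Pi\in\mathbb{R}^{m_u\times m_\xi}$ are given. A value $\theta$ is called consistent with $\Gamma$ if the system with matrices $A(\theta),B(\theta),C(\theta),D(\theta)$ matches $\Gamma$ in the following sense: there exist a nonsingular $T\in\mathbb{R}^{m_x\times m_x}$ and real matrices $G\in\mathbb{R}^{m_\xi\times m_u}$, $Z\in\mathbb{R}^{m_\xi\times(m_x-m_\xi)}$, $S\in\mathbb{R}^{(m_x-m_\xi)\times m_u}$, $F\in\mathbb{R}^{(m_x-m_\xi)\times(m_x-m_\xi)}$, $K\in\mathbb{R}^{m_y\times m_u}$, $H\in\mathbb{R}^{m_y\times(m_x-m_\xi)}$ with $$\begin{bmatrix}A(\theta)&B(\theta)\\ C(\theta)&D(\theta)\end{bmatrix}=\begin{bmatrix}T&0\\0&I_{m_y}\end{bmatrix}\begin{bmatrix}\Xi-G\Pi&Z&G\\ -S\Pi&F&S\\ \Gamma-K\Pi&H&K\end{bmatrix}\begin{bmatrix}T^{-1}&0\\0&I_{m_u}\end{bmatrix}.$$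 *)

theory Defs
  imports "HOL-Analysis.Function_Topology" "Jordan_Normal_Form.DL_Rank"
begin

definition hcat :: "real mat \<Rightarrow> real mat \<Rightarrow> real mat" where
  "hcat A B = four_block_mat A B (0\<^sub>m 0 (dim_col A)) (0\<^sub>m 0 (dim_col B))"

text \<open>The (two-sided) inverse of a square matrix (meaningful when it is invertible).\<close>
definition minv :: "real mat \<Rightarrow> real mat" where
  "minv M = (SOME N. inverts_mat M N \<and> inverts_mat N M)"

fun Ptheta :: "(nat \<Rightarrow> real mat) \<Rightarrow> nat \<Rightarrow> (nat \<Rightarrow> real) \<Rightarrow> real mat" where
  "Ptheta P 0 \<theta> = P 0"
| "Ptheta P (Suc k) \<theta> = Ptheta P k \<theta> + \<theta> (Suc k) \<cdot>\<^sub>m P (Suc k)"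

text \<open>The block system matrix [A(theta) B(theta); C(theta) D(theta)].\<close>
definition sys_mat ::
  "real mat \<Rightarrow> real mat \<Rightarrow> real mat \<Rightarrow> real mat \<Rightarrow> real mat \<Rightarrow> real mat \<Rightarrow> real mat
   \<Rightarrow> real mat \<Rightarrow> real mat \<Rightarrow> nat \<Rightarrow> (nat \<Rightarrow> real mat) \<Rightarrow> nat \<Rightarrow> (nat \<Rightarrow> real) \<Rightarrow> real mat" where
  "sys_mat Axx Bxu Bxv Cyx Czx Dzu Dzv Dyu Dyv mv P m\<theta> \<theta> =
     four_block_mat Axx Bxu Cyx Dyu
     + (Bxv @\<^sub>r Dyv) * minv (1\<^sub>m mv - Ptheta P m\<theta> \<theta> * Dzv) * Ptheta P m\<theta> \<theta> * hcat Czx Dzu"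

definition consistent ::
  "real mat \<Rightarrow> nat \<Rightarrow> nat \<Rightarrow> nat \<Rightarrow> nat \<Rightarrow> real mat \<Rightarrow> real mat \<Rightarrow> real mat \<Rightarrow> bool" where
  "consistent M mx mu my m\<xi> \<Xi> PiM \<Gamma> \<longleftrightarrow>
    (\<exists>T G Z S F K H.
       T \<in> carrier_mat mx mx \<and> invertible_mat T \<and>
       G \<in> carrier_mat m\<xi> mu \<and> Z \<in> carrier_mat m\<xi> (mx - m\<xi>) \<and>
       S \<in> carrier_mat (mx - m\<xi>) mu \<and> F \<in> carrier_mat (mx - m\<xi>) (mx - m\<xi>) \<and>
       K \<in> carrier_mat my mu \<and> H \<in> carrier_mat my (mx - m\<xi>) \<and>
       M = four_block_mat T (0\<^sub>m mx my) (0\<^sub>m my mx) (1\<^sub>m my)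
           * four_block_mat
               (four_block_mat (\<Xi> - G * PiM) Z (- (S * PiM)) F)
               (G @\<^sub>r S)
               (hcat (\<Gamma> - K * PiM) H)
               K
           * four_block_mat (minv T) (0\<^sub>m mx mu) (0\<^sub>m mu mx) (1\<^sub>m mu))"

end

theory Submission
  imports Defs
begin

lemma minv_props:
  assumes T: "T \<in> carrier_mat n n" and inv: "invertible_mat T"
  shows "minv T \<in> carrier_mat n n" "T * minv T = 1\<^sub>m n" "minv T * T = 1\<^sub>m n"
proof -
  have ex: "\<exists>N. inverts_mat T N \<and> inverts_mat N T" using inv unfolding invertible_mat_def by blast
  have h: "inverts_mat T (minv T) \<and> inverts_mat (minv T) T"
    unfolding minv_def by (rule someI_ex[OF ex])
  have 1: "T * minv T = 1\<^sub>m n" using h T unfolding inverts_mat_def by auto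
  have 2: "minv T * T = 1\<^sub>m (dim_row (minv T))" using h unfolding inverts_mat_def by auto
  have c: "dim_col (minv T) = n" using arg_cong[OF 1, of dim_col] by simp
  have r: "dim_row (minv T) = n" using arg_cong[OF 2, of dim_col] T by simp
  show "minv T \<in> carrier_mat n n" using c r by auto
  show "T * minv T = 1\<^sub>m n" by (rule 1)
  show "minv T * T = 1\<^sub>m n" using 2 r by simp
qed

lemma zero_width: "A \<in> carrier_mat a 0 \<Longrightarrow> A = 0\<^sub>m a 0"
  by (rule eq_matI) auto
lemma zero_height: "A \<in> carrier_mat 0 b \<Longrightarrow> A = 0\<^sub>m 0 b"
  by (rule eq_matI) auto

lemma four_block_degen:
  assumes "X \<in> carrier_mat a c" "Y \<in> carrier_mat a 0" "W \<in> carrier_mat 0 c" "Z \<in> carrier_mat 0 0"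
  shows "four_block_mat X Y W Z = X"
  by (rule eq_matI) (insert assms, auto)

lemma append_rows_dims[simp]: "dim_row (A @\<^sub>r B) = dim_row A + dim_row B" "dim_col (A @\<^sub>r B) = dim_col A"
  by (simp_all add: append_rows_def)

lemma append_rows_index:
  assumes "i < dim_row A + dim_row B" "j < dim_col A" "dim_col B = dim_col A"
  shows "(A @\<^sub>r B) $$ (i,j) = (if i < dim_row A then A $$ (i,j) else B $$ (i - dim_row A, j))"
  using assms unfolding append_rows_def by auto

lemma append_rows_mult:
  assumes A: "A \<in> carrier_mat a m" and B: "B \<in> carrier_mat b m" and C: "C \<in> carrier_mat m c"
  shows "(A @\<^sub>r B) * C = (A * C) @\<^sub>r (B * C)"
proof -
  have "(A @\<^sub>r B) * C = four_block_mat A (0\<^sub>m a 0) B (0\<^sub>m b 0) * four_block_mat C (0\<^sub>m m 0) (0\<^sub>m 0 c) (0\<^sub>m 0 0)"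
    using A B C by (simp add: append_rows_def four_block_degen)
  also have "\<dots> = four_block_mat (A * C + 0\<^sub>m a 0 * 0\<^sub>m 0 c) (A * 0\<^sub>m m 0 + 0\<^sub>m a 0 * 0\<^sub>m 0 0)
     (B * C + 0\<^sub>m b 0 * 0\<^sub>m 0 c) (B * 0\<^sub>m m 0 + 0\<^sub>m b 0 * 0\<^sub>m 0 0)"
    by (rule mult_four_block_mat) (insert A B C, auto)
  also have "\<dots> = (A * C) @\<^sub>r (B * C)"
    unfolding append_rows_def using A B C by (intro cong_four_block_mat) auto
  finally show ?thesis .
qed

lemma append_rows_add:
  assumes "A \<in> carrier_mat a c" "B \<in> carrier_mat b c" "C \<in> carrier_mat a c" "D \<in> carrier_mat b c"
  shows "(A @\<^sub>r B) + (C @\<^sub>r D) = (A + C) @\<^sub>r (B + D)"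
proof -
  have c1: "A @\<^sub>r B \<in> carrier_mat (a+b) c" "C @\<^sub>r D \<in> carrier_mat (a+b) c"
     "(A + C) @\<^sub>r (B + D) \<in> carrier_mat (a+b) c" using assms by auto
  show ?thesis
  proof (rule eq_matI)
    fix i j assume "i < dim_row ((A + C) @\<^sub>r (B + D))" "j < dim_col ((A + C) @\<^sub>r (B + D))"
    then have ij: "i < a + b" "j < c" using c1 by auto
    show "((A @\<^sub>r B) + (C @\<^sub>r D)) $$ (i,j) = ((A + C) @\<^sub>r (B + D)) $$ (i,j)"
      using ij c1 assms by (simp add: append_rows_index)
  qed (use c1 in auto)
qed

lemma append_rows_inj:
  assumes "A \<in> carrier_mat a c" "B \<in> carrier_mat b c" "C \<in> carrier_mat a c" "D \<in> carrier_mat b c"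
    and eq: "A @\<^sub>r B = C @\<^sub>r D"
  shows "A = C" "B = D"
proof -
  have e: "(A @\<^sub>r B) $$ (i,j) = (C @\<^sub>r D) $$ (i,j)" for i j using eq by simp
  show "A = C"
  proof (rule eq_matI)
    fix i j assume "i < dim_row C" "j < dim_col C"
    then have "(A @\<^sub>r B) $$ (i,j) = A $$ (i,j)" "(C @\<^sub>r D) $$ (i,j) = C $$ (i,j)"
      using assms(1-4) by (simp_all add: append_rows_index)
    then show "A $$ (i,j) = C $$ (i,j)" using e[of i j] by simp
  qed (insert assms, auto)
  show "B = D"
  proof (rule eq_matI)
    fix i j assume "i < dim_row D" "j < dim_col D"
    then have "(A @\<^sub>r B) $$ (i+a,j) = B $$ (i,j)" "(C @\<^sub>r D) $$ (i+a,j) = D $$ (i,j)"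
      using assms(1-4) by (simp_all add: append_rows_index)
    then show "B $$ (i,j) = D $$ (i,j)" using e[of "i+a" j] by simp
  qed (insert assms, auto)
qed

lemma hcat_mult:
  assumes A: "A \<in> carrier_mat a b1" and B: "B \<in> carrier_mat a b2"
    and C: "C \<in> carrier_mat b1 c" and D: "D \<in> carrier_mat b2 c"
  shows "hcat A B * (C @\<^sub>r D) = A * C + B * D"
proof -
  have "hcat A B * (C @\<^sub>r D) = four_block_mat A B (0\<^sub>m 0 b1) (0\<^sub>m 0 b2) * four_block_mat C (0\<^sub>m b1 0) D (0\<^sub>m b2 0)"
    using A B C D by (simp add: append_rows_def hcat_def)
  also have "\<dots> = four_block_mat (A * C + B * D) (A * 0\<^sub>m b1 0 + B * 0\<^sub>m b2 0)
     (0\<^sub>m 0 b1 * C + 0\<^sub>m 0 b2 * D) (0\<^sub>m 0 b1 * 0\<^sub>m b1 0 + 0\<^sub>m 0 b2 * 0\<^sub>m b2 0)"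
    by (rule mult_four_block_mat) (insert A B C D, auto)
  also have "\<dots> = A * C + B * D"
    by (rule four_block_degen) (insert A B C D, auto)
  finally show ?thesis .
qed

lemma hcat_carrier[simp]: "A \<in> carrier_mat a b1 \<Longrightarrow> B \<in> carrier_mat a b2 \<Longrightarrow> hcat A B \<in> carrier_mat a (b1 + b2)"
  unfolding hcat_def using four_block_carrier_mat[of A a b1 "0\<^sub>m 0 b2" 0 b2 B "0\<^sub>m 0 b1"] by simp

definition Dm :: "real mat \<Rightarrow> nat \<Rightarrow> nat \<Rightarrow> real mat" where
  "Dm A n m = four_block_mat A (0\<^sub>m n m) (0\<^sub>m m n) (1\<^sub>m m)"

lemma Dm_carrier[simp]: "A \<in> carrier_mat n n \<Longrightarrow> Dm A n m \<in> carrier_mat (n + m) (n + m)"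
  unfolding Dm_def by auto

lemma Dm_mult_rows:
  assumes A: "A \<in> carrier_mat n n" and X: "X \<in> carrier_mat n c" and Y: "Y \<in> carrier_mat m c"
  shows "Dm A n m * (X @\<^sub>r Y) = (A * X) @\<^sub>r Y"
proof -
  have "Dm A n m * (X @\<^sub>r Y) = four_block_mat A (0\<^sub>m n m) (0\<^sub>m m n) (1\<^sub>m m) * four_block_mat X (0\<^sub>m n 0) Y (0\<^sub>m m 0)"
    using X Y by (simp add: append_rows_def Dm_def)
  also have "\<dots> = four_block_mat (A * X + 0\<^sub>m n m * Y) (A * 0\<^sub>m n 0 + 0\<^sub>m n m * 0\<^sub>m m 0)
     (0\<^sub>m m n * X + 1\<^sub>m m * Y) (0\<^sub>m m n * 0\<^sub>m n 0 + 1\<^sub>m m * 0\<^sub>m m 0)"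
    by (rule mult_four_block_mat) (insert A X Y, auto)
  also have "\<dots> = (A * X) @\<^sub>r Y"
    unfolding append_rows_def using A X Y by (intro cong_four_block_mat) auto
  finally show ?thesis .
qed

lemma Dm_mult:
  assumes A: "A \<in> carrier_mat n n" and B: "B \<in> carrier_mat n n"
  shows "Dm A n m * Dm B n m = Dm (A * B) n m"
proof -
  have "Dm A n m * Dm B n m = four_block_mat (A * B + 0\<^sub>m n m * 0\<^sub>m m n) (A * 0\<^sub>m n m + 0\<^sub>m n m * 1\<^sub>m m)
     (0\<^sub>m m n * B + 1\<^sub>m m * 0\<^sub>m m n) (0\<^sub>m m n * 0\<^sub>m n m + 1\<^sub>m m * 1\<^sub>m m)"
    unfolding Dm_def by (rule mult_four_block_mat) (insert A B, auto)
  also have "\<dots> = Dm (A * B) n m"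
    unfolding Dm_def using A B by (intro cong_four_block_mat) auto
  finally show ?thesis .
qed

lemma Dm_one: "Dm (1\<^sub>m n) n m = 1\<^sub>m (n + m)"
  unfolding Dm_def by simp


definition Em :: "nat \<Rightarrow> nat \<Rightarrow> real mat" where
  "Em k r = 1\<^sub>m k @\<^sub>r 0\<^sub>m r k"

lemma Em_carrier[simp]: "Em k r \<in> carrier_mat (k + r) k"
  unfolding Em_def by auto

lemma Em_dims[simp]: "dim_row (Em k r) = k + r" "dim_col (Em k r) = k"
  unfolding Em_def by auto

lemma Em_mult: assumes X: "X \<in> carrier_mat k c" shows "Em k r * X = X @\<^sub>r 0\<^sub>m r c"
  unfolding Em_def using X append_rows_mult[of "1\<^sub>m k" k k "0\<^sub>m r k" r X c] by simp

lemma mat_Em_mult: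
  assumes A: "A \<in> carrier_mat a k" and B: "B \<in> carrier_mat a r"
  shows "four_block_mat A B (0\<^sub>m 0 k) (0\<^sub>m 0 r) * Em k r = A"
proof -
  have "four_block_mat A B (0\<^sub>m 0 k) (0\<^sub>m 0 r) * Em k r = hcat A B * (1\<^sub>m k @\<^sub>r 0\<^sub>m r k)"
    unfolding hcat_def Em_def using A B by simp
  also have "\<dots> = A * 1\<^sub>m k + B * 0\<^sub>m r k" by (rule hcat_mult[OF A B]) auto
  also have "\<dots> = A" using A B by simp
  finally show ?thesis .
qed

lemma block_Em_mult:
  assumes "N11 \<in> carrier_mat k k" "N12 \<in> carrier_mat k r" "N21 \<in> carrier_mat r k" "N22 \<in> carrier_mat r r"
  shows "four_block_mat N11 N12 N21 N22 * Em k r = N11 @\<^sub>r N21"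
proof -
  have "four_block_mat N11 N12 N21 N22 * Em k r
     = four_block_mat N11 N12 N21 N22 * four_block_mat (1\<^sub>m k) (0\<^sub>m k 0) (0\<^sub>m r k) (0\<^sub>m r 0)"
    unfolding Em_def append_rows_def by simp
  also have "\<dots> = four_block_mat (N11 * 1\<^sub>m k + N12 * 0\<^sub>m r k) (N11 * 0\<^sub>m k 0 + N12 * 0\<^sub>m r 0)
      (N21 * 1\<^sub>m k + N22 * 0\<^sub>m r k) (N21 * 0\<^sub>m k 0 + N22 * 0\<^sub>m r 0)"
    by (rule mult_four_block_mat) (insert assms, auto)
  also have "\<dots> = N11 @\<^sub>r N21"
    unfolding append_rows_def using assms by (intro cong_four_block_mat) auto
  finally show ?thesis .
qed

lemma block_apply:
  assumes N11: "N11 \<in> carrier_mat k k" and N12: "N12 \<in> carrier_mat k r"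
    and N21: "N21 \<in> carrier_mat r k" and N22: "N22 \<in> carrier_mat r r"
    and G: "G \<in> carrier_mat k q" and S: "S \<in> carrier_mat r q"
    and N31: "N31 \<in> carrier_mat p k" and N32: "N32 \<in> carrier_mat p r"
    and K: "K \<in> carrier_mat p q" and PM: "PM \<in> carrier_mat q k"
  shows "four_block_mat (four_block_mat N11 N12 N21 N22) (G @\<^sub>r S) (hcat N31 N32) K * (Em k r @\<^sub>r PM)
    = ((N11 + G * PM) @\<^sub>r (N21 + S * PM)) @\<^sub>r (N31 + K * PM)"
proof -
  let ?N1 = "four_block_mat N11 N12 N21 N22"
  have N1: "?N1 \<in> carrier_mat (k + r) (k + r)" using N11 N22 by auto
  have GS: "G @\<^sub>r S \<in> carrier_mat (k + r) q" using G S by auto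
  have H: "hcat N31 N32 \<in> carrier_mat p (k + r)" using N31 N32 by auto
  have "Em k r @\<^sub>r PM = four_block_mat (Em k r) (0\<^sub>m (k + r) 0) PM (0\<^sub>m q 0)"
    unfolding append_rows_def using PM by simp
  then have "four_block_mat ?N1 (G @\<^sub>r S) (hcat N31 N32) K * (Em k r @\<^sub>r PM)
    = four_block_mat ?N1 (G @\<^sub>r S) (hcat N31 N32) K * four_block_mat (Em k r) (0\<^sub>m (k + r) 0) PM (0\<^sub>m q 0)"
    by simp
  also have "\<dots> = four_block_mat (?N1 * Em k r + (G @\<^sub>r S) * PM) (?N1 * 0\<^sub>m (k + r) 0 + (G @\<^sub>r S) * 0\<^sub>m q 0)
     (hcat N31 N32 * Em k r + K * PM) (hcat N31 N32 * 0\<^sub>m (k + r) 0 + K * 0\<^sub>m q 0)"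
    by (rule mult_four_block_mat[OF N1 GS H K]) (insert PM, auto)
  also have "?N1 * Em k r = N11 @\<^sub>r N21" by (rule block_Em_mult[OF N11 N12 N21 N22])
  also have "(G @\<^sub>r S) * PM = (G * PM) @\<^sub>r (S * PM)" by (rule append_rows_mult[OF G S PM])
  also have "(N11 @\<^sub>r N21) + ((G * PM) @\<^sub>r (S * PM)) = (N11 + G * PM) @\<^sub>r (N21 + S * PM)"
    by (rule append_rows_add) (insert N11 N21 G S PM, auto)
  also have "hcat N31 N32 * Em k r = N31"
    unfolding hcat_def using mat_Em_mult[OF N31 N32] N31 N32 by simp
  also have "?N1 * 0\<^sub>m (k + r) 0 + (G @\<^sub>r S) * 0\<^sub>m q 0 = 0\<^sub>m (k + r) 0"
    by (rule zero_width) (insert N1 GS, auto)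
  also have "hcat N31 N32 * 0\<^sub>m (k + r) 0 + K * 0\<^sub>m q 0 = 0\<^sub>m p 0"
    by (rule zero_width) (insert H K, auto)
  finally show ?thesis
    unfolding append_rows_def using N11 N21 G S PM N31 K by simp
qed


lemma add_eq_minus:
  fixes A B C :: "real mat"
  assumes "A \<in> carrier_mat a b" "B \<in> carrier_mat a b" "A + B = C"
  shows "A = C - B"
proof (rule eq_matI)
  have C: "C \<in> carrier_mat a b" using assms by auto
  fix i j assume ij: "i < dim_row (C - B)" "j < dim_col (C - B)"
  have "C $$ (i,j) = A $$ (i,j) + B $$ (i,j)" using assms(1,2) ij C unfolding assms(3)[symmetric] by simp
  then show "A $$ (i,j) = (C - B) $$ (i,j)" using assms(2) ij C by simp
qed (insert assms, auto)

lemma add_eq_zero_neg: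
  fixes A B :: "real mat"
  assumes "A \<in> carrier_mat a b" "B \<in> carrier_mat a b" "A + B = 0\<^sub>m a b"
  shows "A = - B"
proof (rule eq_matI)
  fix i j assume ij: "i < dim_row (- B)" "j < dim_col (- B)"
  have ij': "i < a" "j < b" using ij assms by auto
  have "(A + B) $$ (i,j) = 0" using assms(3) ij' by simp
  then have "A $$ (i,j) + B $$ (i,j) = 0" using assms(1,2) ij' by simp
  then show "A $$ (i,j) = (- B) $$ (i,j)" using assms(2) ij' by simp
qed (insert assms, auto)

lemma core_decomp:
  assumes N: "N \<in> carrier_mat (k + r + p) (k + r + q)" and Xi: "Xi \<in> carrier_mat k k"
    and PM: "PM \<in> carrier_mat q k" and Ga: "Ga \<in> carrier_mat p k"
    and eq: "N * (Em k r @\<^sub>r PM) = (Em k r * Xi) @\<^sub>r Ga"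
  shows "\<exists>G Z S F K H. G \<in> carrier_mat k q \<and> Z \<in> carrier_mat k r \<and> S \<in> carrier_mat r q \<and>
     F \<in> carrier_mat r r \<and> K \<in> carrier_mat p q \<and> H \<in> carrier_mat p r \<and>
     N = four_block_mat (four_block_mat (Xi - G * PM) Z (- (S * PM)) F) (G @\<^sub>r S) (hcat (Ga - K * PM) H) K"
proof -
  obtain N1 N2 N3 N4 where sb: "split_block N (k + r) (k + r) = (N1, N2, N3, N4)" by (metis prod_cases4)
  note s = split_block[OF sb, of p q] 
  have N1: "N1 \<in> carrier_mat (k + r) (k + r)" and N2: "N2 \<in> carrier_mat (k + r) q"
    and N3: "N3 \<in> carrier_mat p (k + r)" and N4: "N4 \<in> carrier_mat p q"
    and Ne: "N = four_block_mat N1 N2 N3 N4" using s N by auto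
  obtain N11 N12 N21 N22 where sb1: "split_block N1 k k = (N11, N12, N21, N22)" by (metis prod_cases4)
  note s1 = split_block[OF sb1, of r r]
  have N11: "N11 \<in> carrier_mat k k" and N12: "N12 \<in> carrier_mat k r" and N21: "N21 \<in> carrier_mat r k"
    and N22: "N22 \<in> carrier_mat r r" and N1e: "N1 = four_block_mat N11 N12 N21 N22" using s1 N1 by auto
  obtain G X S Y where sb2: "split_block N2 k q = (G, X, S, Y)" by (metis prod_cases4)
  note s2 = split_block[OF sb2, of r 0]
  have G: "G \<in> carrier_mat k q" and X: "X \<in> carrier_mat k 0" and S: "S \<in> carrier_mat r q"
    and Y: "Y \<in> carrier_mat r 0" and N2e': "N2 = four_block_mat G X S Y" using s2 N2 by auto
  have N2e: "N2 = G @\<^sub>r S" unfolding N2e' append_rows_def using G S zero_width[OF X] zero_width[OF Y] by simp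
  obtain N31 N32 W1 W2 where sb3: "split_block N3 p k = (N31, N32, W1, W2)" by (metis prod_cases4)
  note s3 = split_block[OF sb3, of 0 r]
  have N31: "N31 \<in> carrier_mat p k" and N32: "N32 \<in> carrier_mat p r" and W1: "W1 \<in> carrier_mat 0 k"
    and W2: "W2 \<in> carrier_mat 0 r" and N3e': "N3 = four_block_mat N31 N32 W1 W2" using s3 N3 by auto
  have N3e: "N3 = hcat N31 N32" unfolding N3e' hcat_def using N31 N32 zero_height[OF W1] zero_height[OF W2] by simp
  have Nf: "N = four_block_mat (four_block_mat N11 N12 N21 N22) (G @\<^sub>r S) (hcat N31 N32) N4"
    using Ne N1e N2e N3e by simp
  have "((N11 + G * PM) @\<^sub>r (N21 + S * PM)) @\<^sub>r (N31 + N4 * PM) = (Xi @\<^sub>r 0\<^sub>m r k) @\<^sub>r Ga"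
    using eq unfolding Nf block_apply[OF N11 N12 N21 N22 G S N31 N32 N4 PM] Em_mult[OF Xi] .
  from append_rows_inj[OF _ _ _ _ this, of "k + r" k p]
  have e1: "(N11 + G * PM) @\<^sub>r (N21 + S * PM) = Xi @\<^sub>r 0\<^sub>m r k" and e2: "N31 + N4 * PM = Ga"
    using N11 N21 G S PM N31 N4 Xi Ga by auto
  from append_rows_inj[OF _ _ _ _ e1, of k k r]
  have e3: "N11 + G * PM = Xi" and e4: "N21 + S * PM = 0\<^sub>m r k"
    using N11 N21 G S PM Xi by auto
  have f1: "N11 = Xi - G * PM" by (rule add_eq_minus[OF N11 _ e3]) (insert G PM, auto)
  have f2: "N21 = - (S * PM)" by (rule add_eq_zero_neg[OF N21 _ e4]) (insert S PM, auto)
  have f3: "N31 = Ga - N4 * PM" by (rule add_eq_minus[OF N31 _ e2]) (insert N4 PM, auto)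
  have "N = four_block_mat (four_block_mat (Xi - G * PM) N12 (- (S * PM)) N22) (G @\<^sub>r S) (hcat (Ga - N4 * PM) N32) N4"
    using Nf unfolding f1 f2 f3 .
  then show ?thesis using G N12 S N22 N4 N32 by blast
qed


lemma mult_unit_vec_col:
  assumes A: "(A :: real mat) \<in> carrier_mat n nc" and i: "i < nc"
  shows "A *\<^sub>v unit_vec nc i = col A i"
  by (rule eq_vecI) (insert A i, auto)

lemma rank_kernel_imp:
  assumes A: "(A :: real mat) \<in> carrier_mat n nc"
    and ker: "\<And>v. v \<in> carrier_vec nc \<Longrightarrow> A *\<^sub>v v = 0\<^sub>v n \<Longrightarrow> v = 0\<^sub>v nc"
  shows "vec_space.rank n A = nc"
proof -
  interpret vs: vec_space "TYPE(real)" n .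
  have dist: "distinct (cols A)"
  proof (rule ccontr)
    assume "\<not> distinct (cols A)"
    then obtain i j where ij: "i < length (cols A)" "j < length (cols A)" "i \<noteq> j" "cols A ! i = cols A ! j"
      unfolding distinct_conv_nth by blast
    then have ij': "i < nc" "j < nc" "col A i = col A j" using A by auto
    define v :: "real vec" where "v = unit_vec nc i - unit_vec nc j"
    have v: "v \<in> carrier_vec nc" unfolding v_def by auto
    have "A *\<^sub>v v = col A i - col A j"
      unfolding v_def using A ij' by (simp add: mult_minus_distrib_mat_vec mult_unit_vec_col)
    also have "\<dots> = 0\<^sub>v n" using ij' A by auto
    finally have "v = 0\<^sub>v nc" using ker v by blast
    moreover have "v $ i = 1" unfolding v_def using ij' ij(3) by simp
    ultimately show False using ij' by simp
  qed
  have li: "\<not> vs.lin_dep (set (cols A))"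
  proof
    assume "vs.lin_dep (set (cols A))"
    from vs.lin_depE[OF A this dist] obtain v where "v \<in> carrier_vec nc" "v \<noteq> 0\<^sub>v nc" "A *\<^sub>v v = 0\<^sub>v n" .
    then show False using ker by blast
  qed
  show ?thesis by (rule vs.lin_indpt_full_rank[OF A dist li])
qed

lemma rank_imp_li:
  assumes A: "(A :: real mat) \<in> carrier_mat n nc" and r: "vec_space.rank n A = nc"
  shows "distinct (cols A)" "\<not> module.lin_dep class_ring (module_vec TYPE(real) n) (set (cols A))"
proof -
  interpret vs: vec_space "TYPE(real)" n .
  obtain S where S: "maximal S (\<lambda>T. T \<subseteq> set (cols A) \<and> vs.lin_indpt T)"
    using maximal_exists[of "(\<lambda>T. T \<subseteq> set (cols A) \<and> vs.lin_indpt T)" "card (set (cols A))" "{}"]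
    by (meson List.finite_set card_mono empty_iff empty_subsetI vs.finite_lin_indpt2 rev_finite_subset)
  then have "card S \<le> card (set (cols A))" by (simp add: card_mono maximal_def)
  moreover have "vs.rank A = card S" by (rule vs.rank_card_indpt[OF A S])
  ultimately have le: "nc \<le> card (set (cols A))" using r by simp
  show dist: "distinct (cols A)"
  proof (rule ccontr)
    assume "\<not> distinct (cols A)"
    then have "card (set (cols A)) < length (cols A)"
      using card_distinct card_length le_neq_implies_less by blast
    then show False using le A by simp
  qed
  show "\<not> module.lin_dep class_ring (module_vec TYPE(real) n) (set (cols A))"
    using vs.full_rank_lin_indpt[OF A r dist] .
qed


lemma det_nonzero_invertible:
  assumes T: "(T :: real mat) \<in> carrier_mat n n" and d: "det T \<noteq> 0"
  shows "invertible_mat T"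
proof -
  have "T \<in> Units (ring_mat TYPE(real) n ())" by (rule det_non_zero_imp_unit[OF T d])
  then obtain B where B: "B \<in> carrier_mat n n" "B * T = 1\<^sub>m n" "T * B = 1\<^sub>m n"
    unfolding Units_def ring_mat_def by auto
  show ?thesis unfolding invertible_mat_def inverts_mat_def square_mat.simps using T B by auto
qed

lemma extend_full_rank:
  assumes T1: "(T1 :: real mat) \<in> carrier_mat n k" and kn: "k \<le> n" and r: "vec_space.rank n T1 = k"
  shows "\<exists>T. T \<in> carrier_mat n n \<and> invertible_mat T \<and> T * Em k (n - k) = T1"
proof -
  interpret vs: vec_space "TYPE(real)" n .
  note li = rank_imp_li[OF T1 r]
  define A where "A = set (cols T1)"
  have Ac: "A \<subseteq> carrier_vec n" unfolding A_def using T1 cols_dim by blast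
  define P where "P = (\<lambda>S. A \<subseteq> S \<and> S \<subseteq> carrier_vec n \<and> vs.lin_indpt S)"
  have bound: "finite S \<and> card S \<le> n" if "P S" for S
    using vs.li_le_dim[of S] that unfolding P_def by (auto simp: vs.fin_dim vs.dim_is_n)
  have PA: "P A" unfolding P_def using Ac li(2) A_def by auto
  obtain B where Bf: "finite B" and Bm: "maximal B P" using maximal_exists[of P n A, OF bound PA] by blast
  have PB: "P B" using Bm unfolding maximal_def by auto
  have "maximal B (\<lambda>S. S \<subseteq> carrier_vec n \<and> vs.lin_indpt S)"
    unfolding maximal_def
  proof (intro conjI allI impI)
    show "B \<subseteq> carrier_vec n" "vs.lin_indpt B" using PB unfolding P_def by auto
    fix C assume C: "B \<subseteq> C \<and> C \<subseteq> carrier_vec n \<and> vs.lin_indpt C"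
    then have "P C" using PB unfolding P_def by auto
    then show "C = B" using Bm C unfolding maximal_def by auto
  qed
  then have "vs.basis B" using vs.max_li_is_basis by simp
  then have cardB: "card B = n" using vs.dim_basis[OF Bf] vs.dim_is_n by simp
  obtain xs where xs: "set xs = B - A" "distinct xs" using finite_distinct_list[of "B - A"] Bf by blast
  define L where "L = cols T1 @ xs"
  have AB: "A \<subseteq> B" using PB unfolding P_def by auto
  have setL: "set L = B" unfolding L_def using xs AB A_def by auto
  have distL: "distinct L" unfolding L_def using xs li(1) A_def by auto
  have lenL: "length L = n" using distinct_card[OF distL] setL cardB by simp
  have Lc: "set L \<subseteq> carrier_vec n" using setL PB unfolding P_def by auto
  have lenxs: "length xs = n - k" using lenL T1 unfolding L_def by simp
  define T where "T = mat_of_cols n L"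
  have Tc: "T \<in> carrier_mat n n" unfolding T_def using mat_of_cols_carrier(1)[of n L] lenL by metis
  have colsT: "cols T = L" unfolding T_def using Lc by simp
  have "vs.rank T = n"
    by (rule vs.lin_indpt_full_rank[OF Tc]) (insert colsT distL setL PB, auto simp: P_def)
  then have "det T \<noteq> 0" using vs.det_rank_iff[OF Tc] by simp
  then have inv: "invertible_mat T" by (rule det_nonzero_invertible[OF Tc])
  define T2 where "T2 = mat_of_cols n xs"
  have T2: "T2 \<in> carrier_mat n (n - k)" unfolding T2_def using mat_of_cols_carrier(1)[of n xs] lenxs by metis
  have Tb: "T = four_block_mat T1 T2 (0\<^sub>m 0 k) (0\<^sub>m 0 (n - k))"
  proof (rule eq_matI)
    fix i j assume ij: "i < dim_row (four_block_mat T1 T2 (0\<^sub>m 0 k) (0\<^sub>m 0 (n - k)))"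
       "j < dim_col (four_block_mat T1 T2 (0\<^sub>m 0 k) (0\<^sub>m 0 (n - k)))"
    then have i: "i < n" and j: "j < n" using T1 T2 kn by auto
    have "T $$ (i,j) = L ! j $ i" unfolding T_def using i j lenL by (simp add: mat_of_cols_index)
    also have "\<dots> = (if j < k then T1 $$ (i,j) else T2 $$ (i, j - k))"
      unfolding L_def T2_def using i j T1 lenxs kn by (auto simp: nth_append mat_of_cols_index)
    also have "\<dots> = four_block_mat T1 T2 (0\<^sub>m 0 k) (0\<^sub>m 0 (n - k)) $$ (i,j)"
      using i j T1 T2 kn by simp
    finally show "T $$ (i,j) = four_block_mat T1 T2 (0\<^sub>m 0 k) (0\<^sub>m 0 (n - k)) $$ (i,j)" .
  qed (insert Tc T1 T2 kn, auto)
  have "T * Em k (n - k) = T1" unfolding Tb by (rule mat_Em_mult[OF T1 T2])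
  then show ?thesis using Tc inv by blast
qed


lemma Em_kernel:
  assumes v: "v \<in> carrier_vec k" and e: "Em k r *\<^sub>v v = 0\<^sub>v (k + r)"
  shows "v = 0\<^sub>v k"
proof -
  have "Em k r *\<^sub>v v = (1\<^sub>m k *\<^sub>v v) @\<^sub>v (0\<^sub>m r k *\<^sub>v v)"
    unfolding Em_def by (rule mat_mult_append) (insert v, auto)
  also have "\<dots> = v @\<^sub>v 0\<^sub>v r" using v by auto
  moreover have "0\<^sub>v k @\<^sub>v 0\<^sub>v r = (0\<^sub>v (k + r) :: real vec)" by (rule eq_vecI) auto
  ultimately have "v @\<^sub>v 0\<^sub>v r = 0\<^sub>v k @\<^sub>v 0\<^sub>v r" using e by simp
  then show ?thesis using v by (metis append_vec_eq zero_carrier_vec)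
qed

lemma main_equiv:
  assumes M: "M \<in> carrier_mat (n + p) (n + q)" and kn: "k \<le> n"
    and Xi: "Xi \<in> carrier_mat k k" and PM: "PM \<in> carrier_mat q k" and Ga: "Ga \<in> carrier_mat p k"
  shows "consistent M n q p k Xi PM Ga \<longleftrightarrow>
    (\<exists>T1 \<in> carrier_mat n k. vec_space.rank n T1 = k \<and> M * (T1 @\<^sub>r PM) = (T1 * Xi) @\<^sub>r Ga)"
proof -
  define r where "r = n - k"
  have nkr: "n = k + r" unfolding r_def using kn by simp
  have Em: "Em k r \<in> carrier_mat n k" using nkr by simp
  have EmPM: "Em k r @\<^sub>r PM \<in> carrier_mat (n + q) k" using Em PM by auto
  show ?thesis
  proof
    assume "consistent M n q p k Xi PM Ga"
    then obtain T G Z S F K H where T: "T \<in> carrier_mat n n" and inv: "invertible_mat T"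
      and G: "G \<in> carrier_mat k q" and Z: "Z \<in> carrier_mat k r" and S: "S \<in> carrier_mat r q"
      and F: "F \<in> carrier_mat r r" and K: "K \<in> carrier_mat p q" and H: "H \<in> carrier_mat p r"
      and Meq: "M = Dm T n p * four_block_mat (four_block_mat (Xi - G * PM) Z (- (S * PM)) F) (G @\<^sub>r S)
               (hcat (Ga - K * PM) H) K * Dm (minv T) n q"
      unfolding consistent_def Dm_def[symmetric] r_def by blast
    let ?Nb = "four_block_mat (four_block_mat (Xi - G * PM) Z (- (S * PM)) F) (G @\<^sub>r S) (hcat (Ga - K * PM) H) K"
    note Ti = minv_props[OF T inv]
    have Nb: "?Nb \<in> carrier_mat (n + p) (n + q)"
      using Xi G PM Z S F K H Ga nkr by (auto intro!: four_block_carrier_mat)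
    have ABo: "Dm T n p * ?Nb \<in> carrier_mat (n + p) (n + q)" by (rule mult_carrier_mat[OF Dm_carrier[OF T] Nb])
    define T1 where "T1 = T * Em k r"
    have T1: "T1 \<in> carrier_mat n k" unfolding T1_def using T Em by auto
    have rank: "vec_space.rank n T1 = k"
    proof (rule rank_kernel_imp[OF T1])
      fix v assume v: "v \<in> carrier_vec k" and z: "T1 *\<^sub>v v = 0\<^sub>v n"
      have Ev: "Em k r *\<^sub>v v \<in> carrier_vec n" using Em v by auto
      have "Em k r *\<^sub>v v = (minv T * T) *\<^sub>v (Em k r *\<^sub>v v)" using Ti(3) one_mult_mat_vec[OF Ev] by metis
      also have "\<dots> = minv T *\<^sub>v (T *\<^sub>v (Em k r *\<^sub>v v))" by (rule assoc_mult_mat_vec[OF Ti(1) T Ev])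
      also have "T *\<^sub>v (Em k r *\<^sub>v v) = T1 *\<^sub>v v" unfolding T1_def using T Em v by (simp add: assoc_mult_mat_vec)
      also have "minv T *\<^sub>v (T1 *\<^sub>v v) = 0\<^sub>v n" unfolding z using Ti(1) by (intro eq_vecI) (auto simp: scalar_prod_def)
      finally have "Em k r *\<^sub>v v = 0\<^sub>v (k + r)" using nkr by simp
      then show "v = 0\<^sub>v k" by (rule Em_kernel[OF v])
    qed
    have "M * (T1 @\<^sub>r PM) = M * (Dm T n q * (Em k r @\<^sub>r PM))"
      unfolding T1_def using Dm_mult_rows[OF T Em PM] by simp
    also have "\<dots> = Dm T n p * ?Nb * (Dm (minv T) n q * Dm T n q) * (Em k r @\<^sub>r PM)"
    proof -
      have DT: "Dm T n q \<in> carrier_mat (n + q) (n + q)" using T by simp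
      have DTi: "Dm (minv T) n q \<in> carrier_mat (n + q) (n + q)" using Ti by simp
      have AB: "Dm T n p * ?Nb \<in> carrier_mat (n + p) (n + q)" by (rule mult_carrier_mat[OF Dm_carrier[OF T] Nb])
      have "M * (Dm T n q * (Em k r @\<^sub>r PM)) = (M * Dm T n q) * (Em k r @\<^sub>r PM)"
        by (rule assoc_mult_mat[symmetric, OF M DT EmPM])
      also have "M * Dm T n q = (Dm T n p * ?Nb) * (Dm (minv T) n q * Dm T n q)"
        unfolding Meq by (rule assoc_mult_mat[OF AB DTi DT])
      finally show ?thesis .
    qed
    also have "Dm (minv T) n q * Dm T n q = 1\<^sub>m (n + q)" using Dm_mult[OF Ti(1) T] Ti Dm_one by simp
    also have "Dm T n p * ?Nb * 1\<^sub>m (n + q) * (Em k r @\<^sub>r PM) = Dm T n p * (?Nb * (Em k r @\<^sub>r PM))"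
      using right_mult_one_mat[OF ABo] assoc_mult_mat[OF Dm_carrier[OF T] Nb EmPM] by simp
    also have "?Nb * (Em k r @\<^sub>r PM) = ((Xi - G * PM + G * PM) @\<^sub>r (- (S * PM) + S * PM)) @\<^sub>r (Ga - K * PM + K * PM)"
    proof -
      have c1: "Xi - G * PM \<in> carrier_mat k k" using Xi G PM by auto
      have c2: "- (S * PM) \<in> carrier_mat r k" using S PM by auto
      have c3: "Ga - K * PM \<in> carrier_mat p k" using Ga K PM by auto
      show ?thesis by (rule block_apply[OF c1 Z c2 F G S c3 H K PM])
    qed
    also have "\<dots> = (Em k r * Xi) @\<^sub>r Ga"
    proof -
      have "Xi - G * PM + G * PM = Xi" using Xi G PM by auto
      moreover have "- (S * PM) + S * PM = 0\<^sub>m r k" using S PM by auto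
      moreover have "Ga - K * PM + K * PM = Ga" using Ga K PM by auto
      ultimately show ?thesis using Em_mult[OF Xi] by simp
    qed
    also have "Dm T n p * ((Em k r * Xi) @\<^sub>r Ga) = (T * (Em k r * Xi)) @\<^sub>r Ga"
      by (rule Dm_mult_rows[OF T _ Ga]) (insert Em Xi, auto)
    also have "T * (Em k r * Xi) = T1 * Xi" unfolding T1_def using T Em Xi by (simp add: assoc_mult_mat)
    finally show "\<exists>T1 \<in> carrier_mat n k. vec_space.rank n T1 = k \<and> M * (T1 @\<^sub>r PM) = (T1 * Xi) @\<^sub>r Ga"
      using T1 rank by blast
  next
    assume "\<exists>T1 \<in> carrier_mat n k. vec_space.rank n T1 = k \<and> M * (T1 @\<^sub>r PM) = (T1 * Xi) @\<^sub>r Ga"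
    then obtain T1 where T1: "T1 \<in> carrier_mat n k" and rank: "vec_space.rank n T1 = k"
      and eq: "M * (T1 @\<^sub>r PM) = (T1 * Xi) @\<^sub>r Ga" by blast
    obtain T where T: "T \<in> carrier_mat n n" and inv: "invertible_mat T" and TE: "T * Em k r = T1"
      using extend_full_rank[OF T1 kn rank] unfolding r_def by blast
    note Ti = minv_props[OF T inv]
    define N where "N = Dm (minv T) n p * M * Dm T n q"
    have A: "Dm (minv T) n p \<in> carrier_mat (n + p) (n + p)" using Ti(1) by simp
    have P: "Dm T n p \<in> carrier_mat (n + p) (n + p)" using T by simp
    have D: "Dm T n q \<in> carrier_mat (n + q) (n + q)" using T by simp
    have Q: "Dm (minv T) n q \<in> carrier_mat (n + q) (n + q)" using Ti(1) by simp
    have AM: "Dm (minv T) n p * M \<in> carrier_mat (n + p) (n + q)" by (rule mult_carrier_mat[OF A M])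
    have N: "N \<in> carrier_mat (n + p) (n + q)" unfolding N_def by (rule mult_carrier_mat[OF AM D])
    have DX: "Dm T n q * (Em k r @\<^sub>r PM) \<in> carrier_mat (n + q) k" by (rule mult_carrier_mat[OF D EmPM])
    have "N * (Em k r @\<^sub>r PM) = Dm (minv T) n p * (M * (Dm T n q * (Em k r @\<^sub>r PM)))"
      unfolding N_def using assoc_mult_mat[OF AM D EmPM] assoc_mult_mat[OF A M DX] by simp
    also have "Dm T n q * (Em k r @\<^sub>r PM) = T1 @\<^sub>r PM" using Dm_mult_rows[OF T Em PM] TE by simp
    also have "M * (T1 @\<^sub>r PM) = (T1 * Xi) @\<^sub>r Ga" by (rule eq)
    also have "Dm (minv T) n p * ((T1 * Xi) @\<^sub>r Ga) = (minv T * (T1 * Xi)) @\<^sub>r Ga"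
      by (rule Dm_mult_rows[OF Ti(1) _ Ga]) (insert T1 Xi, auto)
    also have "minv T * (T1 * Xi) = Em k r * Xi"
    proof -
      have EX: "Em k r * Xi \<in> carrier_mat n k" using Em Xi by simp
      have "minv T * (T1 * Xi) = minv T * (T * (Em k r * Xi))" unfolding TE[symmetric] using assoc_mult_mat[OF T Em Xi] by simp
      also have "\<dots> = (minv T * T) * (Em k r * Xi)" by (rule assoc_mult_mat[symmetric, OF Ti(1) T EX])
      also have "\<dots> = Em k r * Xi" unfolding Ti(3) by (rule left_mult_one_mat[OF EX])
      finally show ?thesis .
    qed
    finally have Neq: "N * (Em k r @\<^sub>r PM) = (Em k r * Xi) @\<^sub>r Ga" .
    have N': "N \<in> carrier_mat (k + r + p) (k + r + q)" using N nkr by simp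
    obtain G Z S F K H where G: "G \<in> carrier_mat k q" and Z: "Z \<in> carrier_mat k r" and S: "S \<in> carrier_mat r q"
      and F: "F \<in> carrier_mat r r" and K: "K \<in> carrier_mat p q" and H: "H \<in> carrier_mat p r"
      and Nb: "N = four_block_mat (four_block_mat (Xi - G * PM) Z (- (S * PM)) F) (G @\<^sub>r S) (hcat (Ga - K * PM) H) K"
      using core_decomp[OF N' Xi PM Ga Neq] by blast
    have PA: "Dm T n p * Dm (minv T) n p = 1\<^sub>m (n + p)" using Dm_mult[OF T Ti(1)] Ti Dm_one by simp
    have DQ: "Dm T n q * Dm (minv T) n q = 1\<^sub>m (n + q)" using Dm_mult[OF T Ti(1)] Ti Dm_one by simp
    have "Dm T n p * N = (Dm T n p * (Dm (minv T) n p * M)) * Dm T n q"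
      unfolding N_def by (rule assoc_mult_mat[symmetric, OF P AM D])
    also have "Dm T n p * (Dm (minv T) n p * M) = (Dm T n p * Dm (minv T) n p) * M"
      by (rule assoc_mult_mat[symmetric, OF P A M])
    also have "\<dots> = M" unfolding PA using M by simp
    finally have PN: "Dm T n p * N = M * Dm T n q" .
    have MD: "M * Dm T n q \<in> carrier_mat (n + p) (n + q)" by (rule mult_carrier_mat[OF M D])
    have "Dm T n p * N * Dm (minv T) n q = M * Dm T n q * Dm (minv T) n q" unfolding PN ..
    also have "\<dots> = M * (Dm T n q * Dm (minv T) n q)" by (rule assoc_mult_mat[OF M D Q])
    also have "\<dots> = M" unfolding DQ using M by simp
    finally have "M = Dm T n p * N * Dm (minv T) n q" by simp
    then show "consistent M n q p k Xi PM Ga"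
      unfolding consistent_def Dm_def[symmetric] r_def[symmetric] Nb
      using T inv G Z S F K H by blast
  qed
qed


lemma sys_mat_carrier:
  assumes Axx: "Axx \<in> carrier_mat mx mx" and Bxu: "Bxu \<in> carrier_mat mx mu"
    and Bxv: "Bxv \<in> carrier_mat mx mv" and Cyx: "Cyx \<in> carrier_mat my mx"
    and Czx: "Czx \<in> carrier_mat mz mx" and Dzu: "Dzu \<in> carrier_mat mz mu"
    and Dyu: "Dyu \<in> carrier_mat my mu" and Dyv: "Dyv \<in> carrier_mat my mv"
  shows "sys_mat Axx Bxu Bxv Cyx Czx Dzu Dzv Dyu Dyv mv P m\<theta> \<theta> \<in> carrier_mat (mx + my) (mx + mu)"
proof -
  have "dim_row ((Bxv @\<^sub>r Dyv) * minv (1\<^sub>m mv - Ptheta P m\<theta> \<theta> * Dzv) * Ptheta P m\<theta> \<theta> * hcat Czx Dzu) = mx + my"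
    using Bxv Dyv by simp
  moreover have "dim_col ((Bxv @\<^sub>r Dyv) * minv (1\<^sub>m mv - Ptheta P m\<theta> \<theta> * Dzv) * Ptheta P m\<theta> \<theta> * hcat Czx Dzu) = mx + mu"
    using hcat_carrier[OF Czx Dzu] by simp
  ultimately show ?thesis unfolding sys_mat_def by (intro carrier_matI) auto
qed

theorem theorem2:
  fixes mx mu my mv mz m\<theta> m\<xi> :: nat
    and Axx Bxu Bxv Cyx Czx Dzu Dzv Dyu Dyv \<Xi> PiM \<Gamma> :: "real mat"
    and P :: "nat \<Rightarrow> real mat"
    and \<Theta> :: "(nat \<Rightarrow> real) set"
    and \<theta> :: "nat \<Rightarrow> real"
  assumes dims: "mx \<ge> 1" "mu \<ge> 1" "my \<ge> 1" "mv \<ge> 1" "mz \<ge> 1" "m\<theta> \<ge> 1" "m\<xi> \<ge> 1"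
    and Axx: "Axx \<in> carrier_mat mx mx" and Bxu: "Bxu \<in> carrier_mat mx mu"
    and Bxv: "Bxv \<in> carrier_mat mx mv" and Cyx: "Cyx \<in> carrier_mat my mx"
    and Czx: "Czx \<in> carrier_mat mz mx" and Dzu: "Dzu \<in> carrier_mat mz mu"
    and Dzv: "Dzv \<in> carrier_mat mz mv" and Dyu: "Dyu \<in> carrier_mat my mu"
    and Dyv: "Dyv \<in> carrier_mat my mv"
    and P: "\<And>i. i \<le> m\<theta> \<Longrightarrow> P i \<in> carrier_mat mv mz"
    and \<Theta>_dom: "\<And>th i. th \<in> \<Theta> \<Longrightarrow> i = 0 \<or> m\<theta> < i \<Longrightarrow> th i = 0"
    and \<Theta>_compact: "compact \<Theta>"
    and \<Theta>_inv: "\<And>th. th \<in> \<Theta> \<Longrightarrow> invertible_mat (1\<^sub>m mv - Ptheta P m\<theta> th * Dzv)"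
    and \<Xi>: "\<Xi> \<in> carrier_mat m\<xi> m\<xi>" and PiM: "PiM \<in> carrier_mat mu m\<xi>"
    and \<Gamma>: "\<Gamma> \<in> carrier_mat my m\<xi>"
    and mx_ge: "mx \<ge> m\<xi>"
    and \<theta>: "\<theta> \<in> \<Theta>"
  shows "consistent (sys_mat Axx Bxu Bxv Cyx Czx Dzu Dzv Dyu Dyv mv P m\<theta> \<theta>) mx mu my m\<xi> \<Xi> PiM \<Gamma>
     \<longleftrightarrow> (\<exists>T1 \<in> carrier_mat mx m\<xi>. vec_space.rank mx T1 = m\<xi> \<and>
            sys_mat Axx Bxu Bxv Cyx Czx Dzu Dzv Dyu Dyv mv P m\<theta> \<theta> * (T1 @\<^sub>r PiM) = (T1 * \<Xi>) @\<^sub>r \<Gamma>)"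
  by (rule main_equiv[OF sys_mat_carrier[OF Axx Bxu Bxv Cyx Czx Dzu Dyu Dyv] mx_ge \<Xi> PiM \<Gamma>])

end
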